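(* Let $A\in\mathbb{R}^{m\times n}$, $b\in\mathbb{R}^m$, let $L\in\mathbb{R}^{s\times n}$ have full column rank, and let $W_1,\dots,W_M\in\mathbb{R}^{m\times\ell}$ satisfy $\sum_{i=1}^M W_iW_i^\top = I_m$. Let $\tau(1),\tau(2),\dots$ be independent random variables, each uniformly distributed on $\{1,\dots,M\}$ (sampling with replacement). Write $A_{\tau(k)}=W_{\tau(k)}^\top A$, $b_{\tau(k)}=W_{\tau(k)}^\top b$. (i) Let $\lambda>0$, $y_0\in\mathbb{R}^n$ arbitrary, and define $$y_k = y_{k-1} - B_kA_{\tau(k)}^\top(A_{\tau(k)}y_{k-1}-b_{\tau(k)}),\qquad B_k=\Big(\lambda L^\top L+\sum_{i=1}^kA_{\tau(i)}^\top A_{\tau(i)}\Big)^{-1},\quad k\in\mathbb{N}.$$ If $A$ has full column rank, then $y_k\to x(0)=(A^\top A)^{-1}A^\top b$ almost surely as $k\to\infty$. (ii) Let $\Lambda_1,\Lambda_2,\dots$ be real numbers with $\sum_{i=1}^k\Lambda_i>0$ for all $k$ such that the limit $\lambda=\lim_{k\to\infty}\frac{M}{k}\sum_{i=1}^k\Lambda_i$ exists, is finite and satisfies $\lambda>0$. Let $x_0\in\mathbb{R}^n$ be arbitrary and define $$x_k = x_{k-1}-B_k\big(A_{\tau(k)}^\top(A_{\tau(k)}x_{k-1}-b_{\tau(k)})+\Lambda_kL^\top Lx_{k-1}\big),\qquad B_k=\Big(\sum_{i=1}^k\Lambda_iL^\top L+\sum_{i=1}^kA_{\tau(i)}^\top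 A_{\tau(i)}\Big)^{-1}.$$ Then $x_k\to x(\lambda)=(A^\top A+\lambda L^\top L)^{-1}A^\top b$ almost surely as $k\to\infty$.
   Context: For $\lambda\ge 0$ (with $\lambda=0$ only when $A$ has full column rank), $x(\lambda)=(A^\top A+\lambda L^\top L)^{-1}A^\top b$ denotes the Tikhonov solution of $\min_x\|Ax-b\|_2^2+\lambda\|Lx\|_2^2$. *)

theory Defs
  imports "HOL-Probability.Probability"
begin

definition blkA :: "(nat \<Rightarrow> real^'l^'m) \<Rightarrow> real^'n^'m \<Rightarrow> nat \<Rightarrow> real^'n^'l" where
  "blkA W A i = transpose (W i) ** A"

definition blkb :: "(nat \<Rightarrow> real^'l^'m) \<Rightarrow> real^'m \<Rightarrow> nat \<Rightarrow> real^'l" where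
  "blkb W b i = transpose (W i) *v b"

definition tikhonov :: "real^'n^'m \<Rightarrow> real^'m \<Rightarrow> real^'n^'s \<Rightarrow> real \<Rightarrow> real^'n" where
  "tikhonov A b L lam =
     matrix_inv (transpose A ** A + lam *\<^sub>R (transpose L ** L)) *v (transpose A *v b)"

primrec iter_i :: "real^'n^'m \<Rightarrow> real^'m \<Rightarrow> real^'n^'s \<Rightarrow> (nat \<Rightarrow> real^'l^'m)
      \<Rightarrow> (nat \<Rightarrow> nat) \<Rightarrow> real \<Rightarrow> real^'n \<Rightarrow> nat \<Rightarrow> real^'n" where
  "iter_i A b L W t lam y0 0 = y0"
| "iter_i A b L W t lam y0 (Suc k) =
     (let Bk = matrix_inv (lam *\<^sub>R (transpose L ** L)
                 + (\<Sum>i\<in>{1..Suc k}. transpose (blkA W A (t i)) ** blkA W A (t i)));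
          y = iter_i A b L W t lam y0 k
      in y - Bk *v (transpose (blkA W A (t (Suc k)))
                     *v (blkA W A (t (Suc k)) *v y - blkb W b (t (Suc k)))))"

primrec iter_ii :: "real^'n^'m \<Rightarrow> real^'m \<Rightarrow> real^'n^'s \<Rightarrow> (nat \<Rightarrow> real^'l^'m)
      \<Rightarrow> (nat \<Rightarrow> nat) \<Rightarrow> (nat \<Rightarrow> real) \<Rightarrow> real^'n \<Rightarrow> nat \<Rightarrow> real^'n" where
  "iter_ii A b L W t Lam x0 0 = x0"
| "iter_ii A b L W t Lam x0 (Suc k) =
     (let Bk = matrix_inv ((\<Sum>i\<in>{1..Suc k}. Lam i) *\<^sub>R (transpose L ** L)
                 + (\<Sum>i\<in>{1..Suc k}. transpose (blkA W A (t i)) ** blkA W A (t i)));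
          x = iter_ii A b L W t Lam x0 k
      in x - Bk *v (transpose (blkA W A (t (Suc k)))
                     *v (blkA W A (t (Suc k)) *v x - blkb W b (t (Suc k)))
                   + Lam (Suc k) *\<^sub>R ((transpose L ** L) *v x)))"

end

theory Submission
  imports Defs
begin


lemma minv_right:
  fixes A :: "real^'n^'n"
  assumes "invertible A" shows "A ** matrix_inv A = mat 1" and "matrix_inv A ** A = mat 1"
proof -
  have "\<exists>A'. A ** A' = mat 1 \<and> A' ** A = mat 1" using assms unfolding invertible_def by blast
  then have "A ** matrix_inv A = mat 1 \<and> matrix_inv A ** A = mat 1"
    unfolding matrix_inv_def by (rule someI_ex)
  then show "A ** matrix_inv A = mat 1" and "matrix_inv A ** A = mat 1" by auto
qed

lemma quad_tt:
  fixes B :: "real^'n^'m"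
  shows "inner v ((transpose B ** B) *v v) = (norm (B *v v))^2"
proof -
  have "(transpose B ** B) *v v = (B *v v) v* B"
    by (simp add: matrix_vector_mul_assoc[symmetric])
  then have "inner v ((transpose B ** B) *v v) = inner ((B *v v) v* B) v"
    by (simp add: inner_commute)
  also have "\<dots> = inner (B *v v) (B *v v)" by (rule dot_lmul_matrix)
  finally show ?thesis by (simp add: power2_norm_eq_inner)
qed

lemma pd_invertible:
  fixes X :: "real^'n^'n"
  assumes "\<And>v. v \<noteq> 0 \<Longrightarrow> inner v (X *v v) > 0"
  shows "invertible X"
proof -
  have "\<forall>x. X *v x = 0 \<longrightarrow> x = 0"
    using assms by (metis inner_zero_right less_irrefl)
  then show ?thesis
    by (simp add: invertible_left_inverse matrix_left_invertible_ker)
qed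

lemma matvec_norm_le:
  fixes A :: "real^'n^'m"
  shows "norm (A *v x) \<le> (\<Sum>i\<in>UNIV. \<Sum>j\<in>UNIV. \<bar>A $ i $ j\<bar>) * norm x"
proof -
  have "norm (A *v x) \<le> onorm ((*v) A) * norm x"
    by (rule onorm[OF matrix_vector_mul_bounded_linear])
  also have "\<dots> \<le> (\<Sum>i\<in>UNIV. \<Sum>j\<in>UNIV. \<bar>A $ i $ j\<bar>) * norm x"
    by (intro mult_right_mono onorm_le_matrix_component_sum) auto
  finally show ?thesis .
qed

lemma conv_lemma:
  fixes G :: "nat \<Rightarrow> real^'n^'n" and Glim :: "real^'n^'n" and h x :: "nat \<Rightarrow> real^'n"
  assumes G: "G \<longlonglongrightarrow> Glim" and h: "h \<longlonglongrightarrow> hlim"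
    and ev: "eventually (\<lambda>k. G k *v x k = h k) sequentially"
    and c: "c > 0" and pos: "\<And>v. c * (norm v)^2 \<le> inner v (Glim *v v)"
    and sol: "Glim *v xs = hlim"
  shows "x \<longlonglongrightarrow> xs"
proof -
  have lb: "c * norm v \<le> norm (Glim *v v)" for v
  proof (cases "v = 0")
    case False
    have "c * (norm v)^2 \<le> norm v * norm (Glim *v v)"
      using pos[of v] norm_cauchy_schwarz[of v "Glim *v v"] by linarith
    then show ?thesis using False by (simp add: power2_eq_square)
  qed simp
  define d where "d k = (\<Sum>i\<in>UNIV. \<Sum>j\<in>UNIV. \<bar>(G k - Glim) $ i $ j\<bar>)" for k
  have d: "d \<longlonglongrightarrow> 0"
  proof -
    have "d \<longlonglongrightarrow> (\<Sum>i\<in>UNIV. \<Sum>j\<in>UNIV. \<bar>(Glim - Glim) $ i $ j\<bar>)"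
      unfolding d_def by (intro tendsto_intros G)
    then show ?thesis by simp
  qed
  have "eventually (\<lambda>k. d k < c/2) sequentially"
    using order_tendstoD(2)[OF d, of "c/2"] c by simp
  then have ev2: "eventually (\<lambda>k. norm (x k - xs) \<le> (2/c) * (d k * norm xs + norm (h k - hlim))) sequentially"
    using ev
  proof eventually_elim
    case (elim k)
    have "Glim *v (x k - xs) = (Glim - G k) *v (x k - xs) + (Glim - G k) *v xs + (h k - hlim)"
      using elim(2) sol by (simp add: algebra_simps)
    then have "norm (Glim *v (x k - xs)) \<le> norm ((Glim - G k) *v (x k - xs)) + norm ((Glim - G k) *v xs) + norm (h k - hlim)"
      by (metis norm_triangle_le order_refl add_mono)
    moreover have "norm ((Glim - G k) *v y) \<le> d k * norm y" for y
    proof -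
      have "(\<Sum>i\<in>UNIV. \<Sum>j\<in>UNIV. \<bar>(Glim - G k) $ i $ j\<bar>) = d k"
        unfolding d_def by (intro sum.cong refl) (simp add: abs_minus_commute)
      then show ?thesis using matvec_norm_le[of "Glim - G k" y] by simp
    qed
    ultimately have "c * norm (x k - xs) \<le> d k * norm (x k - xs) + d k * norm xs + norm (h k - hlim)"
      using lb[of "x k - xs"] by (smt (verit))
    moreover have "d k * norm (x k - xs) \<le> c/2 * norm (x k - xs)"
      using elim(1) by (intro mult_right_mono) auto
    ultimately have "c/2 * norm (x k - xs) \<le> d k * norm xs + norm (h k - hlim)" by linarith
    then show ?case using c by (simp add: field_simps)
  qed
  have "(\<lambda>k. (2/c) * (d k * norm xs + norm (h k - hlim))) \<longlonglongrightarrow> (2/c) * (0 * norm xs + norm (hlim - hlim))"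
    by (intro tendsto_intros d h)
  then have "(\<lambda>k. (2/c) * (d k * norm xs + norm (h k - hlim))) \<longlonglongrightarrow> 0" by simp
  then have "(\<lambda>k. x k - xs) \<longlonglongrightarrow> 0"
    by (rule Lim_null_comparison[OF ev2])
  then show ?thesis by (simp add: LIM_zero_iff)
qed



lemma iter_i_eq:
  fixes A :: "real^'n^'m" and L :: "real^'n^'s" and W :: "nat \<Rightarrow> real^'l^'m"
  assumes inv: "\<And>k. invertible (lam *\<^sub>R (transpose L ** L)
      + (\<Sum>i\<in>{1..Suc k}. transpose (blkA W A (t i)) ** blkA W A (t i)))"
  shows "(lam *\<^sub>R (transpose L ** L) + (\<Sum>i\<in>{1..k}. transpose (blkA W A (t i)) ** blkA W A (t i)))
           *v iter_i A b L W t lam y0 k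
         = (lam *\<^sub>R (transpose L ** L)) *v y0 + (\<Sum>i\<in>{1..k}. transpose (blkA W A (t i)) *v blkb W b (t i))"
proof (induction k)
  case 0
  then show ?case by simp
next
  case (Suc k)
  define H where "H = lam *\<^sub>R (transpose L ** L) + (\<Sum>i\<in>{1..k}. transpose (blkA W A (t i)) ** blkA W A (t i))"
  define Q where "Q = transpose (blkA W A (t (Suc k))) ** blkA W A (t (Suc k))"
  define y where "y = iter_i A b L W t lam y0 k"
  define r where "r = transpose (blkA W A (t (Suc k))) *v (blkA W A (t (Suc k)) *v y - blkb W b (t (Suc k)))"
  have H': "lam *\<^sub>R (transpose L ** L) + (\<Sum>i\<in>{1..Suc k}. transpose (blkA W A (t i)) ** blkA W A (t i)) = H + Q"
    by (simp add: H_def Q_def add.assoc)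
  have invH: "invertible (H + Q)" using inv[of k] H' by simp
  have it: "iter_i A b L W t lam y0 (Suc k) = y - matrix_inv (H + Q) *v r"
    by (simp add: Let_def H'[symmetric] y_def r_def)
  have "(H + Q) *v (y - matrix_inv (H + Q) *v r) = (H + Q) *v y - r"
    by (simp add: matrix_vector_mult_diff_distrib matrix_vector_mul_assoc minv_right(1)[OF invH])
  also have "\<dots> = H *v y + transpose (blkA W A (t (Suc k))) *v blkb W b (t (Suc k))"
    by (simp add: r_def Q_def matrix_vector_mult_add_rdistrib matrix_vector_mult_diff_distrib
        matrix_vector_mul_assoc[symmetric])
  finally have calc: "(H + Q) *v (y - matrix_inv (H + Q) *v r) = H *v y + transpose (blkA W A (t (Suc k))) *v blkb W b (t (Suc k))" .
  have "(H + Q) *v iter_i A b L W t lam y0 (Suc k) = (lam *\<^sub>R (transpose L ** L)) *v y0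
     + (\<Sum>i\<in>{1..k}. transpose (blkA W A (t i)) *v blkb W b (t i)) + transpose (blkA W A (t (Suc k))) *v blkb W b (t (Suc k))"
  proof -
    have "H *v y = (lam *\<^sub>R (transpose L ** L)) *v y0 + (\<Sum>i\<in>{1..k}. transpose (blkA W A (t i)) *v blkb W b (t i))"
      using Suc.IH unfolding H_def y_def .
    then show ?thesis using calc unfolding it by simp
  qed
  then show ?case unfolding H' by (simp add: add.assoc)
qed

lemma iter_ii_eq:
  fixes A :: "real^'n^'m" and L :: "real^'n^'s" and W :: "nat \<Rightarrow> real^'l^'m"
  assumes inv: "\<And>k. invertible ((\<Sum>i\<in>{1..Suc k}. Lam i) *\<^sub>R (transpose L ** L)
      + (\<Sum>i\<in>{1..Suc k}. transpose (blkA W A (t i)) ** blkA W A (t i)))"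
  shows "((\<Sum>i\<in>{1..k}. Lam i) *\<^sub>R (transpose L ** L) + (\<Sum>i\<in>{1..k}. transpose (blkA W A (t i)) ** blkA W A (t i)))
           *v iter_ii A b L W t Lam x0 k
         = (\<Sum>i\<in>{1..k}. transpose (blkA W A (t i)) *v blkb W b (t i))"
proof (induction k)
  case 0
  then show ?case by simp
next
  case (Suc k)
  define H where "H = (\<Sum>i\<in>{1..k}. Lam i) *\<^sub>R (transpose L ** L) + (\<Sum>i\<in>{1..k}. transpose (blkA W A (t i)) ** blkA W A (t i))"
  define Q where "Q = Lam (Suc k) *\<^sub>R (transpose L ** L) + transpose (blkA W A (t (Suc k))) ** blkA W A (t (Suc k))"
  define y where "y = iter_ii A b L W t Lam x0 k"
  define r where "r = transpose (blkA W A (t (Suc k))) *v (blkA W A (t (Suc k)) *v y - blkb W b (t (Suc k)))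
                     + Lam (Suc k) *\<^sub>R ((transpose L ** L) *v y)"
  have H': "(\<Sum>i\<in>{1..Suc k}. Lam i) *\<^sub>R (transpose L ** L) + (\<Sum>i\<in>{1..Suc k}. transpose (blkA W A (t i)) ** blkA W A (t i)) = H + Q"
    by (simp add: H_def Q_def algebra_simps)
  have invH: "invertible (H + Q)" using inv[of k] H' by simp
  have it: "iter_ii A b L W t Lam x0 (Suc k) = y - matrix_inv (H + Q) *v r"
    by (simp add: Let_def H'[symmetric] y_def r_def)
  have "(H + Q) *v (y - matrix_inv (H + Q) *v r) = (H + Q) *v y - r"
    by (simp add: matrix_vector_mult_diff_distrib matrix_vector_mul_assoc minv_right(1)[OF invH])
  also have "\<dots> = H *v y + transpose (blkA W A (t (Suc k))) *v blkb W b (t (Suc k))"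
    by (simp add: r_def Q_def matrix_vector_mult_add_rdistrib matrix_vector_mult_diff_distrib
        matrix_vector_mul_assoc[symmetric] scaleR_matrix_vector_assoc[symmetric])
  finally have calc: "(H + Q) *v (y - matrix_inv (H + Q) *v r) = H *v y + transpose (blkA W A (t (Suc k))) *v blkb W b (t (Suc k))" .
  have "(H + Q) *v iter_ii A b L W t Lam x0 (Suc k) =
     (\<Sum>i\<in>{1..k}. transpose (blkA W A (t i)) *v blkb W b (t i)) + transpose (blkA W A (t (Suc k))) *v blkb W b (t (Suc k))"
  proof -
    have "H *v y = (\<Sum>i\<in>{1..k}. transpose (blkA W A (t i)) *v blkb W b (t i))"
      using Suc.IH unfolding H_def y_def .
    then show ?thesis using calc unfolding it by simp
  qed
  then show ?case unfolding H' by (simp add: add.assoc)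
qed

lemma sc_if: "(if P then 1 else 0::real) *\<^sub>R (x::'a::real_vector) = (if P then x else 0)" by simp

lemma freq_avg:
  fixes f :: "nat \<Rightarrow> 'a::real_normed_vector"
  assumes t: "\<forall>j\<ge>1. t j \<in> {1..M}"
    and fr: "\<forall>i\<in>{1..M}. (\<lambda>k. (\<Sum>j\<in>{1..k}. if t j = i then 1 else 0::real) / real k) \<longlonglongrightarrow> 1 / real M"
  shows "(\<lambda>k. (1 / real k) *\<^sub>R (\<Sum>j\<in>{1..k}. f (t j))) \<longlonglongrightarrow> (1 / real M) *\<^sub>R (\<Sum>i\<in>{1..M}. f i)"
proof -
  have eq: "(1 / real k) *\<^sub>R (\<Sum>j\<in>{1..k}. f (t j))
      = (\<Sum>i\<in>{1..M}. ((\<Sum>j\<in>{1..k}. if t j = i then 1 else 0::real) / real k) *\<^sub>R f i)" for k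
  proof -
    have "(\<Sum>i\<in>{1..M}. (\<Sum>j\<in>{1..k}. if t j = i then 1 else 0::real) *\<^sub>R f i)
        = (\<Sum>i\<in>{1..M}. \<Sum>j\<in>{1..k}. if t j = i then f i else 0)"
      by (intro sum.cong refl) (simp add: scaleR_sum_left sc_if)
    also have "\<dots> = (\<Sum>j\<in>{1..k}. \<Sum>i\<in>{1..M}. if t j = i then f i else 0)"
      by (rule sum.swap)
    also have "\<dots> = (\<Sum>j\<in>{1..k}. f (t j))"
    proof (rule sum.cong[OF refl])
      fix j assume "j \<in> {1..k}"
      then have "t j \<in> {1..M}" using t by auto
      then show "(\<Sum>i\<in>{1..M}. if t j = i then f i else 0) = f (t j)"
        by (simp add: sum.delta cong: if_cong)
    qed
    finally have e: "(\<Sum>i\<in>{1..M}. (\<Sum>j\<in>{1..k}. if t j = i then 1 else 0::real) *\<^sub>R f i) = (\<Sum>j\<in>{1..k}. f (t j))" .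
    have "(1 / real k) *\<^sub>R (\<Sum>j\<in>{1..k}. f (t j)) = (1 / real k) *\<^sub>R (\<Sum>i\<in>{1..M}. (\<Sum>j\<in>{1..k}. if t j = i then 1 else 0::real) *\<^sub>R f i)"
      by (simp only: e)
    also have "\<dots> = (\<Sum>i\<in>{1..M}. ((\<Sum>j\<in>{1..k}. if t j = i then 1 else 0::real) / real k) *\<^sub>R f i)"
      unfolding scaleR_sum_right scaleR_scaleR by (intro sum.cong refl) simp
    finally show ?thesis .
  qed
  have "(\<lambda>k. \<Sum>i\<in>{1..M}. ((\<Sum>j\<in>{1..k}. if t j = i then 1 else 0::real) / real k) *\<^sub>R f i)
      \<longlonglongrightarrow> (\<Sum>i\<in>{1..M}. (1 / real M) *\<^sub>R f i)"
    using fr by (intro tendsto_sum tendsto_scaleR) auto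
  then show ?thesis unfolding eq by (simp only: scaleR_sum_right)
qed



lemma (in prob_space) freq_AE:
  fixes \<tau> :: "nat \<Rightarrow> 'a \<Rightarrow> nat" and N :: nat and i :: nat
  assumes indep: "indep_vars (\<lambda>_. count_space UNIV) \<tau> {1..}"
    and unif: "\<And>k. k \<ge> 1 \<Longrightarrow> distr M (count_space UNIV) (\<tau> k) = measure_pmf (pmf_of_set {1..N})"
    and N: "N \<ge> 1" and i: "i \<in> {1..N}"
  shows "AE \<omega> in M. (\<lambda>k. (\<Sum>j\<in>{1..k}. if \<tau> j \<omega> = i then 1 else 0::real) / real k) \<longlonglongrightarrow> 1 / real N"
proof -
  have meas: "\<tau> j \<in> measurable M (count_space UNIV)" if "j \<ge> 1" for j
    using indep that unfolding indep_vars_def by auto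
  define g where "g x = (if x = i then 1 else 0::real)" for x :: nat
  define Y where "Y j x = (if 1 \<le> j then g x else 0)" for j :: nat and x :: nat
  define X where "X j \<omega> = Y j (\<tau> j \<omega>)" for j \<omega>
  have gm: "g \<in> borel_measurable (count_space UNIV)" by simp
  have Xm[measurable]: "X j \<in> borel_measurable M" for j
  proof (cases "j \<ge> 1")
    case True
    then have "X j = g \<circ> \<tau> j" by (auto simp: X_def Y_def)
    then show ?thesis using measurable_comp[OF meas[OF True] gm] by simp
  next
    case False
    then have "X j = (\<lambda>_. 0)" by (auto simp: X_def Y_def)
    then show ?thesis by simp
  qed
  have distrX: "distr M borel (X j) = distr (measure_pmf (pmf_of_set {1..N})) borel g" if "j \<ge> 1" for j
  proof -
    have "X j = g \<circ> \<tau> j" using that by (auto simp: X_def Y_def)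
    then show ?thesis using distr_distr[OF gm meas[OF that]] unif[OF that] by simp
  qed
  have EX: "expectation (X j) = 1 / real N" if "j \<ge> 1" for j
  proof -
    have "expectation (X j) = integral\<^sup>L M (\<lambda>\<omega>. g (\<tau> j \<omega>))"
    proof -
      have "X j = (\<lambda>\<omega>. g (\<tau> j \<omega>))" using that by (auto simp: X_def Y_def)
      then show ?thesis by simp
    qed
    also have "\<dots> = integral\<^sup>L (distr M (count_space UNIV) (\<tau> j)) g"
      by (rule integral_distr[OF meas[OF that] gm, symmetric])
    also have "\<dots> = sum g {1..N} / card {1..N}"
      using unif[OF that] N by (simp add: integral_pmf_of_set)
    also have "sum g {1..N} = 1" using i by (simp add: g_def)
    finally show ?thesis by simp
  qed
  have indepX: "indep_vars (\<lambda>_. borel) X {1..k}" for k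
  proof -
    have "indep_vars (\<lambda>_. count_space UNIV) \<tau> {1..k}"
      by (rule indep_vars_subset[OF indep]) auto
    then have "indep_vars (\<lambda>_. borel) (\<lambda>j x. Y j (\<tau> j x)) {1..k}"
      by (rule indep_vars_compose2) simp
    then show ?thesis unfolding X_def .
  qed
  have hoef: "prob {x\<in>space M. \<bar>(\<Sum>j\<in>{1..k}. X j x) / real k - 1 / real N\<bar> \<ge> e}
                \<le> 2 * exp (-2 * real k * e\<^sup>2)" if "k \<ge> 1" "e \<ge> 0" for k e
  proof -
    interpret I: iid_interval_bounded_random_variables M "{1..k}" X "X 1" 0 1
    proof
      show "finite {1..k}" by simp
      show "indep_vars (\<lambda>_. borel) X {1..k}" by (rule indepX)
      show "distr M borel (X j) = distr M borel (X 1)" if "j \<in> {1..k}" for j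
        using that distrX[of j] distrX[of 1] by simp
      show "random_variable borel (X 1)" by simp
      show "AE x in M. X 1 x \<in> {0..1}" by (simp add: X_def Y_def g_def)
    qed
    interpret H: Hoeffding_ineq_iid M "{1..k}" X "X 1" 0 1 "expectation (X 1)"
      by unfold_locales
    have e1: "expectation (X 1) = 1 / real N" using EX[of 1] by simp
    have ck: "card {1..k} = k" by simp
    have "(1::real) - 0 = 1" by simp
    have ne: "{1..k} \<noteq> {}" using that(1) by simp
    from H.Hoeffding_ineq_abs_ge'[OF that(2) zero_less_one ne] show ?thesis
      unfolding e1 ck \<open>(1::real) - 0 = 1\<close> power_one div_by_1 .
  qed
  define Aset where "Aset e k = {x\<in>space M. \<bar>(\<Sum>j\<in>{1..k}. X j x) / real k - 1 / real N\<bar> \<ge> e}" for e k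
  have ev: "AE x in M. eventually (\<lambda>k. \<bar>(\<Sum>j\<in>{1..k}. X j x) / real k - 1 / real N\<bar> < e) sequentially"
    if e: "e > 0" for e
  proof -
    have sets: "Aset e k \<in> sets M" for k
      unfolding Aset_def by measurable
    have sg: "summable (\<lambda>k. 2 * exp (-2 * e\<^sup>2) ^ k)"
      using e by (intro summable_mult summable_geometric) auto
    have "summable (\<lambda>k. measure M (Aset e k))"
    proof (rule summable_comparison_test'[OF sg, of 1])
      fix k :: nat assume "k \<ge> 1"
      have "measure M (Aset e k) \<le> 2 * exp (-2 * real k * e\<^sup>2)"
        using hoef[of k e] \<open>k \<ge> 1\<close> e unfolding Aset_def by simp
      also have "\<dots> = 2 * exp (-2 * e\<^sup>2) ^ k"
        by (simp add: exp_of_nat_mult[symmetric] mult_ac)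
      finally show "norm (measure M (Aset e k)) \<le> 2 * exp (-2 * e\<^sup>2) ^ k" by simp
    qed
    then have "AE x in M. eventually (\<lambda>k. x \<in> space M - Aset e k) sequentially"
      by (intro borel_cantelli_AE1 sets) (auto simp: emeasure_eq_measure)
    then show ?thesis
      by eventually_elim (auto simp: Aset_def elim!: eventually_mono)
  qed
  have "AE x in M. \<forall>n::nat. eventually (\<lambda>k. \<bar>(\<Sum>j\<in>{1..k}. X j x) / real k - 1 / real N\<bar> < 1 / Suc n) sequentially"
    unfolding AE_all_countable by (intro allI ev) simp
  then show ?thesis
  proof eventually_elim
    case (elim x)
    have sumX: "(\<Sum>j\<in>{1..k}. X j x) = (\<Sum>j\<in>{1..k}. if \<tau> j x = i then 1 else 0)" for k
      by (intro sum.cong refl) (auto simp: X_def Y_def g_def)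
    show ?case
    proof (rule tendstoI)
      fix r :: real assume "r > 0"
      then obtain n :: nat where n: "1 / Suc n < r"
        using nat_approx_posE by blast
      show "eventually (\<lambda>k. dist ((\<Sum>j\<in>{1..k}. if \<tau> j x = i then 1 else 0::real) / real k) (1 / real N) < r) sequentially"
        using elim[rule_format, of n] unfolding sumX by eventually_elim (use n in \<open>auto simp: dist_real_def\<close>)
    qed
  qed
qed

lemma (in prob_space) range_AE:
  fixes \<tau> :: "nat \<Rightarrow> 'a \<Rightarrow> nat" and N :: nat
  assumes indep: "indep_vars (\<lambda>_. count_space UNIV) \<tau> {1..}"
    and unif: "\<And>k. k \<ge> 1 \<Longrightarrow> distr M (count_space UNIV) (\<tau> k) = measure_pmf (pmf_of_set {1..N})"
    and N: "N \<ge> 1"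
  shows "AE \<omega> in M. \<forall>j\<ge>1. \<tau> j \<omega> \<in> {1..N}"
proof -
  have "AE \<omega> in M. \<tau> j \<omega> \<in> {1..N}" if "j \<ge> 1" for j
  proof -
    have meas: "\<tau> j \<in> measurable M (count_space UNIV)"
      using indep that unfolding indep_vars_def by auto
    have "AE x in distr M (count_space UNIV) (\<tau> j). x \<in> {1..N}"
      using N by (subst unif[OF that]) (auto simp: AE_measure_pmf_iff)
    then show ?thesis by (subst (asm) AE_distr_iff[OF meas]) auto
  qed
  then have "AE \<omega> in M. \<forall>j. j \<ge> 1 \<longrightarrow> \<tau> j \<omega> \<in> {1..N}"
    unfolding AE_all_countable by auto
  then show ?thesis by auto
qed



lemma mm_rdistrib: "((A::real^'n^'m) + B) ** C = A ** C + B ** C"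
  by (vector matrix_matrix_mult_def sum.distrib[symmetric] field_simps)

lemma sum_mm: "(\<Sum>i\<in>S. (X::real^'k^'n) ** F i ** (Y::real^'p^'k2)) = X ** (\<Sum>i\<in>S. F i) ** Y"
  by (induct S rule: infinite_finite_induct) (simp_all add: matrix_add_ldistrib mm_rdistrib)

lemma sum_mv: "(\<Sum>i\<in>S. (X::real^'k^'n) *v (F i *v (y::real^'p))) = X *v ((\<Sum>i\<in>S. F i) *v y)"
  by (induct S rule: infinite_finite_induct)
     (simp_all add: matrix_vector_mult_add_rdistrib matrix_vector_right_distrib)

lemma inner_sum_mv: "inner v ((\<Sum>j\<in>S. (F j :: real^'n^'n)) *v v) = (\<Sum>j\<in>S. inner v (F j *v v))"
  by (induct S rule: infinite_finite_induct)
     (simp_all add: matrix_vector_mult_add_rdistrib inner_add_right)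

lemma quad_lower:
  fixes L :: "real^'n^'s" and B :: "nat \<Rightarrow> real^'n^'l"
  shows "inner v ((a *\<^sub>R (transpose L ** L) + (\<Sum>j\<in>S. transpose (B j) ** B j)) *v v)
          \<ge> a * (norm (L *v v))^2"
proof -
  have "inner v ((a *\<^sub>R (transpose L ** L) + (\<Sum>j\<in>S. transpose (B j) ** B j)) *v v)
       = a * (norm (L *v v))^2 + (\<Sum>j\<in>S. (norm (B j *v v))^2)"
    by (simp add: matrix_vector_mult_add_rdistrib inner_add_right inner_sum_mv quad_tt
        scaleR_matrix_vector_assoc[symmetric])
  moreover have "(\<Sum>j\<in>S. (norm (B j *v v))^2) \<ge> 0" by (intro sum_nonneg) simp
  ultimately show ?thesis by linarith
qed

lemma blk_sums:
  fixes A :: "real^'n^'m" and W :: "nat \<Rightarrow> real^'l^'m"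
  assumes "(\<Sum>i\<in>{1..M}. W i ** transpose (W i)) = mat 1"
  shows "(\<Sum>i\<in>{1..M}. transpose (blkA W A i) ** blkA W A i) = transpose A ** A"
    and "(\<Sum>i\<in>{1..M}. transpose (blkA W A i) *v blkb W b i) = transpose A *v b"
proof -
  have "(\<Sum>i\<in>{1..M}. transpose (blkA W A i) ** blkA W A i)
      = (\<Sum>i\<in>{1..M}. transpose A ** (W i ** transpose (W i)) ** A)"
    by (simp add: blkA_def matrix_transpose_mul matrix_mul_assoc)
  also have "\<dots> = transpose A ** A" unfolding sum_mm assms by simp
  finally show "(\<Sum>i\<in>{1..M}. transpose (blkA W A i) ** blkA W A i) = transpose A ** A" .
  have "(\<Sum>i\<in>{1..M}. transpose (blkA W A i) *v blkb W b i)
      = (\<Sum>i\<in>{1..M}. transpose A *v ((W i ** transpose (W i)) *v b))"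
    by (intro sum.cong refl) (simp add: blkA_def blkb_def matrix_transpose_mul matrix_vector_mul_assoc matrix_mul_assoc del: transpose_matrix_vector)
  also have "\<dots> = transpose A *v b"
    unfolding sum_mv assms by simp
  finally show "(\<Sum>i\<in>{1..M}. transpose (blkA W A i) *v blkb W b i) = transpose A *v b" .
qed

lemma bound_below:
  fixes A :: "real^'n^'m"
  assumes "rank A = CARD('n)"
  obtains c where "c > 0" "\<And>v. c * norm v \<le> norm (A *v v)"
  using linear_inj_bounded_below_pos[of "(*v) A"] assms
  by (metis full_rank_injective matrix_vector_mul_linear)



theorem theorem2p2:
  fixes A :: "real^'n^'m" and b :: "real^'m" and L :: "real^'n^'s"
    and W :: "nat \<Rightarrow> real^'l^'m" and M :: nat
    and P :: "'w measure" and \<tau> :: "nat \<Rightarrow> 'w \<Rightarrow> nat"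
  assumes L_rank: "rank L = CARD('n)"
    and W_sum: "(\<Sum>i\<in>{1..M}. W i ** transpose (W i)) = mat 1"
    and P: "prob_space P"
    and indep: "prob_space.indep_vars P (\<lambda>_. count_space UNIV) \<tau> {1..}"
    and unif: "\<And>k. k \<ge> 1 \<Longrightarrow>
                 distr P (count_space UNIV) (\<tau> k) = measure_pmf (pmf_of_set {1..M})"
  shows
   "(\<forall>lam y0. lam > 0 \<longrightarrow> rank A = CARD('n) \<longrightarrow>
        (AE \<omega> in P. (\<lambda>k. iter_i A b L W (\<lambda>i. \<tau> i \<omega>) lam y0 k)
                       \<longlonglongrightarrow> matrix_inv (transpose A ** A) *v (transpose A *v b)))
    \<and> (\<forall>Lam lam x0. (\<forall>k\<ge>1. (\<Sum>i\<in>{1..k}. Lam i) > 0) \<longrightarrow>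
        (\<lambda>k. real M / real k * (\<Sum>i\<in>{1..k}. Lam i)) \<longlonglongrightarrow> lam \<longrightarrow> lam > 0 \<longrightarrow>
        (AE \<omega> in P. (\<lambda>k. iter_ii A b L W (\<lambda>i. \<tau> i \<omega>) Lam x0 k)
                       \<longlonglongrightarrow> tikhonov A b L lam))"
proof -
  interpret PS: prob_space P by (rule P)
  have M1: "M \<ge> 1"
  proof (rule ccontr)
    assume "\<not> M \<ge> 1"
    then have "M = 0" by simp
    with W_sum have "(0::real^'m^'m) = mat 1" by simp
    moreover have "(mat 1 :: real^'m^'m) $ i $ i = 1" for i by (simp add: mat_def)
    ultimately show False by (metis zero_index zero_neq_one)
  qed
  have Mpos: "real M > 0" using M1 by simp
  define good where "good \<omega> \<longleftrightarrow> (\<forall>j\<ge>1. \<tau> j \<omega> \<in> {1..M}) \<and>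
     (\<forall>i\<in>{1..M}. (\<lambda>k. (\<Sum>j\<in>{1..k}. if \<tau> j \<omega> = i then 1 else 0::real) / real k) \<longlonglongrightarrow> 1 / real M)" for \<omega>
  have AEgood: "AE \<omega> in P. good \<omega>"
  proof -
    have "AE \<omega> in P. \<forall>i\<in>{1..M}. (\<lambda>k. (\<Sum>j\<in>{1..k}. if \<tau> j \<omega> = i then 1 else 0::real) / real k) \<longlonglongrightarrow> 1 / real M"
      by (rule AE_finite_allI[OF finite_atLeastAtMost PS.freq_AE[OF indep unif M1]])
    moreover have "AE \<omega> in P. \<forall>j\<ge>1. \<tau> j \<omega> \<in> {1..M}" by (rule PS.range_AE[OF indep unif M1])
    ultimately show ?thesis unfolding good_def AE_conj_iff by blast
  qed
  have avg: "(\<lambda>k. (1 / real k) *\<^sub>R (\<Sum>j\<in>{1..k}. f (\<tau> j \<omega>))) \<longlonglongrightarrow> (1 / real M) *\<^sub>R (\<Sum>i\<in>{1..M}. f i)"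
    if "good \<omega>" for \<omega> and f :: "nat \<Rightarrow> 'z::real_normed_vector"
    using that unfolding good_def by (intro freq_avg) auto
  obtain cL where cL: "cL > 0" "\<And>v. cL * norm v \<le> norm (L *v v)"
    using bound_below[OF L_rank] by blast
  have Lsq: "(cL * norm v)^2 \<le> (norm (L *v v))^2" for v
    using cL(2)[of v] cL(1) by (intro power_mono) auto
  have SQ: "(\<Sum>i\<in>{1..M}. transpose (blkA W A i) ** blkA W A i) = transpose A ** A"
    and Sb: "(\<Sum>i\<in>{1..M}. transpose (blkA W A i) *v blkb W b i) = transpose A *v b"
    using blk_sums[OF W_sum] by blast+
  have invpos: "invertible (a *\<^sub>R (transpose L ** L) + (\<Sum>j\<in>S. transpose (B j) ** B j))"
    if "a > 0" for a and S :: "nat set" and B :: "nat \<Rightarrow> real^'n^'l"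
  proof (rule pd_invertible)
    fix v :: "real^'n" assume "v \<noteq> 0"
    have "0 < a * (cL * norm v)^2" using \<open>v \<noteq> 0\<close> cL(1) that by simp
    also have "\<dots> \<le> a * (norm (L *v v))^2" using Lsq[of v] that by (intro mult_left_mono) auto
    also have "\<dots> \<le> inner v ((a *\<^sub>R (transpose L ** L) + (\<Sum>j\<in>S. transpose (B j) ** B j)) *v v)"
      by (rule quad_lower)
    finally show "0 < inner v ((a *\<^sub>R (transpose L ** L) + (\<Sum>j\<in>S. transpose (B j) ** B j)) *v v)" .
  qed
  show ?thesis
  proof (intro conjI allI impI)
    fix lam :: real and y0 :: "real^'n"
    assume lam: "lam > 0" and rA: "rank A = CARD('n)"
    obtain cA where cA: "cA > 0" "\<And>v. cA * norm v \<le> norm (A *v v)"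
      using bound_below[OF rA] by blast
    have Asq: "(cA * norm v)^2 \<le> (norm (A *v v))^2" for v
      using cA(2)[of v] cA(1) by (intro power_mono) auto
    have invAA: "invertible (transpose A ** A)"
    proof (rule pd_invertible)
      fix v :: "real^'n" assume "v \<noteq> 0"
      have "0 < (cA * norm v)^2" using \<open>v \<noteq> 0\<close> cA(1) by simp
      also have "\<dots> \<le> inner v ((transpose A ** A) *v v)" unfolding quad_tt by (rule Asq)
      finally show "0 < inner v ((transpose A ** A) *v v)" .
    qed
    show "AE \<omega> in P. (\<lambda>k. iter_i A b L W (\<lambda>i. \<tau> i \<omega>) lam y0 k)
                       \<longlonglongrightarrow> matrix_inv (transpose A ** A) *v (transpose A *v b)"
      using AEgood
    proof eventually_elim
      case (elim \<omega>)
      let ?Q = "\<lambda>k. (\<Sum>i\<in>{1..k}. transpose (blkA W A (\<tau> i \<omega>)) ** blkA W A (\<tau> i \<omega>))"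
      let ?R = "\<lambda>k. (\<Sum>i\<in>{1..k}. transpose (blkA W A (\<tau> i \<omega>)) *v blkb W b (\<tau> i \<omega>))"
      have eq: "(lam *\<^sub>R (transpose L ** L) + ?Q k) *v iter_i A b L W (\<lambda>i. \<tau> i \<omega>) lam y0 k
          = (lam *\<^sub>R (transpose L ** L)) *v y0 + ?R k" for k
        by (rule iter_i_eq) (rule invpos[OF lam])
      show ?case
      proof (rule conv_lemma[where G = "\<lambda>k. (1 / real k) *\<^sub>R (lam *\<^sub>R (transpose L ** L) + ?Q k)"
            and h = "\<lambda>k. (1 / real k) *\<^sub>R ((lam *\<^sub>R (transpose L ** L)) *v y0 + ?R k)"
            and Glim = "(1 / real M) *\<^sub>R (transpose A ** A)"
            and hlim = "(1 / real M) *\<^sub>R (transpose A *v b)" and c = "cA^2 / real M"])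
        have "(\<lambda>k. (1 / real k) *\<^sub>R (lam *\<^sub>R (transpose L ** L)) + (1 / real k) *\<^sub>R ?Q k)
            \<longlonglongrightarrow> 0 *\<^sub>R (lam *\<^sub>R (transpose L ** L)) + (1 / real M) *\<^sub>R (\<Sum>i\<in>{1..M}. transpose (blkA W A i) ** blkA W A i)"
          by (intro tendsto_add tendsto_scaleR lim_1_over_n tendsto_const avg[OF elim])
        then show "(\<lambda>k. (1 / real k) *\<^sub>R (lam *\<^sub>R (transpose L ** L) + ?Q k)) \<longlonglongrightarrow> (1 / real M) *\<^sub>R (transpose A ** A)"
          unfolding SQ scaleR_add_right by simp
        have "(\<lambda>k. (1 / real k) *\<^sub>R ((lam *\<^sub>R (transpose L ** L)) *v y0) + (1 / real k) *\<^sub>R ?R k)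
            \<longlonglongrightarrow> 0 *\<^sub>R ((lam *\<^sub>R (transpose L ** L)) *v y0) + (1 / real M) *\<^sub>R (\<Sum>i\<in>{1..M}. transpose (blkA W A i) *v blkb W b i)"
          by (intro tendsto_add tendsto_scaleR lim_1_over_n tendsto_const avg[OF elim])
        then show "(\<lambda>k. (1 / real k) *\<^sub>R ((lam *\<^sub>R (transpose L ** L)) *v y0 + ?R k)) \<longlonglongrightarrow> (1 / real M) *\<^sub>R (transpose A *v b)"
          unfolding Sb scaleR_add_right by simp
        show "eventually (\<lambda>k. ((1 / real k) *\<^sub>R (lam *\<^sub>R (transpose L ** L) + ?Q k)) *v iter_i A b L W (\<lambda>i. \<tau> i \<omega>) lam y0 k
              = (1 / real k) *\<^sub>R ((lam *\<^sub>R (transpose L ** L)) *v y0 + ?R k)) sequentially"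
          by (intro always_eventually allI) (simp only: scaleR_matrix_vector_assoc[symmetric] eq)
        show "0 < cA^2 / real M" using cA(1) Mpos by simp
        show "cA^2 / real M * (norm v)^2 \<le> inner v (((1 / real M) *\<^sub>R (transpose A ** A)) *v v)" for v
        proof -
          have "inner v (((1 / real M) *\<^sub>R (transpose A ** A)) *v v) = (norm (A *v v))^2 / real M"
            by (simp add: scaleR_matrix_vector_assoc[symmetric] quad_tt)
          moreover have "cA^2 / real M * (norm v)^2 = (cA * norm v)^2 / real M"
            by (simp add: power_mult_distrib)
          ultimately show ?thesis using Asq[of v] Mpos by (simp add: divide_right_mono)
        qed
        show "((1 / real M) *\<^sub>R (transpose A ** A)) *v (matrix_inv (transpose A ** A) *v (transpose A *v b))
              = (1 / real M) *\<^sub>R (transpose A *v b)"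
        proof -
          have "(transpose A ** A) *v (matrix_inv (transpose A ** A) *v (transpose A *v b)) = transpose A *v b"
            unfolding matrix_vector_mul_assoc[of "transpose A ** A" "matrix_inv (transpose A ** A)"]
              minv_right(1)[OF invAA] by simp
          then show ?thesis by (metis scaleR_matrix_vector_assoc)
        qed
      qed
    qed
  next
    fix Lam :: "nat \<Rightarrow> real" and lam :: real and x0 :: "real^'n"
    assume Spos: "\<forall>k\<ge>1. (\<Sum>i\<in>{1..k}. Lam i) > 0"
      and lim: "(\<lambda>k. real M / real k * (\<Sum>i\<in>{1..k}. Lam i)) \<longlonglongrightarrow> lam"
      and lam: "lam > 0"
    define S where "S k = (\<Sum>i\<in>{1..k}. Lam i)" for k
    have Slim: "(\<lambda>k. S k / real k) \<longlonglongrightarrow> lam / real M"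
    proof -
      have "(\<lambda>k. (real M / real k * S k) / real M) \<longlonglongrightarrow> lam / real M"
        using lim Mpos unfolding S_def by (intro tendsto_divide tendsto_const) auto
      moreover have "(\<lambda>k. (real M / real k * S k) / real M) = (\<lambda>k. S k / real k)"
        using Mpos by (intro ext) simp
      ultimately show ?thesis by simp
    qed
    let ?T = "transpose A ** A + lam *\<^sub>R (transpose L ** L)"
    have Tquad: "inner v (?T *v v) = (norm (A *v v))^2 + lam * (norm (L *v v))^2" for v
      by (simp add: matrix_vector_mult_add_rdistrib inner_add_right quad_tt
          scaleR_matrix_vector_assoc[symmetric])
    have Tlow: "lam * (cL * norm v)^2 \<le> inner v (?T *v v)" for v
    proof -
      have "lam * (cL * norm v)^2 \<le> lam * (norm (L *v v))^2"
        using Lsq[of v] lam by (intro mult_left_mono) auto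
      then show ?thesis unfolding Tquad using zero_le_power2[of "norm (A *v v)"] by linarith
    qed
    have invT: "invertible ?T"
    proof (rule pd_invertible)
      fix v :: "real^'n" assume "v \<noteq> 0"
      have "0 < lam * (cL * norm v)^2" using \<open>v \<noteq> 0\<close> cL(1) lam by simp
      also have "\<dots> \<le> inner v (?T *v v)" by (rule Tlow)
      finally show "0 < inner v (?T *v v)" .
    qed
    show "AE \<omega> in P. (\<lambda>k. iter_ii A b L W (\<lambda>i. \<tau> i \<omega>) Lam x0 k) \<longlonglongrightarrow> tikhonov A b L lam"
      using AEgood
    proof eventually_elim
      case (elim \<omega>)
      let ?Q = "\<lambda>k. (\<Sum>i\<in>{1..k}. transpose (blkA W A (\<tau> i \<omega>)) ** blkA W A (\<tau> i \<omega>))"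
      let ?R = "\<lambda>k. (\<Sum>i\<in>{1..k}. transpose (blkA W A (\<tau> i \<omega>)) *v blkb W b (\<tau> i \<omega>))"
      have eq: "(S k *\<^sub>R (transpose L ** L) + ?Q k) *v iter_ii A b L W (\<lambda>i. \<tau> i \<omega>) Lam x0 k = ?R k" for k
        unfolding S_def
      proof (rule iter_ii_eq)
        fix k
        show "invertible ((\<Sum>i\<in>{1..Suc k}. Lam i) *\<^sub>R (transpose L ** L)
            + (\<Sum>i\<in>{1..Suc k}. transpose (blkA W A (\<tau> i \<omega>)) ** blkA W A (\<tau> i \<omega>)))"
          using Spos by (intro invpos) auto
      qed
      show ?case unfolding tikhonov_def
      proof (rule conv_lemma[where G = "\<lambda>k. (1 / real k) *\<^sub>R (S k *\<^sub>R (transpose L ** L) + ?Q k)"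
            and h = "\<lambda>k. (1 / real k) *\<^sub>R ?R k"
            and Glim = "(1 / real M) *\<^sub>R ?T"
            and hlim = "(1 / real M) *\<^sub>R (transpose A *v b)" and c = "lam * cL^2 / real M"])
        have "(\<lambda>k. (S k / real k) *\<^sub>R (transpose L ** L) + (1 / real k) *\<^sub>R ?Q k)
            \<longlonglongrightarrow> (lam / real M) *\<^sub>R (transpose L ** L) + (1 / real M) *\<^sub>R (\<Sum>i\<in>{1..M}. transpose (blkA W A i) ** blkA W A i)"
          by (intro tendsto_add tendsto_scaleR Slim tendsto_const avg[OF elim])
        moreover have "(\<lambda>k. (S k / real k) *\<^sub>R (transpose L ** L) + (1 / real k) *\<^sub>R ?Q k)
            = (\<lambda>k. (1 / real k) *\<^sub>R (S k *\<^sub>R (transpose L ** L) + ?Q k))"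
          by (intro ext) (simp add: scaleR_add_right)
        moreover have "(lam / real M) *\<^sub>R (transpose L ** L) + (1 / real M) *\<^sub>R (transpose A ** A) = (1 / real M) *\<^sub>R ?T"
          by (simp add: scaleR_add_right)
        ultimately show "(\<lambda>k. (1 / real k) *\<^sub>R (S k *\<^sub>R (transpose L ** L) + ?Q k)) \<longlonglongrightarrow> (1 / real M) *\<^sub>R ?T"
          unfolding SQ by simp
        have "(\<lambda>k. (1 / real k) *\<^sub>R ?R k)
            \<longlonglongrightarrow> (1 / real M) *\<^sub>R (\<Sum>i\<in>{1..M}. transpose (blkA W A i) *v blkb W b i)"
          by (rule avg[OF elim])
        then show "(\<lambda>k. (1 / real k) *\<^sub>R ?R k) \<longlonglongrightarrow> (1 / real M) *\<^sub>R (transpose A *v b)"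
          unfolding Sb .
        show "eventually (\<lambda>k. ((1 / real k) *\<^sub>R (S k *\<^sub>R (transpose L ** L) + ?Q k)) *v iter_ii A b L W (\<lambda>i. \<tau> i \<omega>) Lam x0 k
              = (1 / real k) *\<^sub>R ?R k) sequentially"
          by (intro always_eventually allI) (simp only: scaleR_matrix_vector_assoc[symmetric] eq)
        show "0 < lam * cL^2 / real M" using cL(1) lam Mpos by simp
        show "lam * cL^2 / real M * (norm v)^2 \<le> inner v (((1 / real M) *\<^sub>R ?T) *v v)" for v
        proof -
          have e1: "inner v (((1 / real M) *\<^sub>R ?T) *v v) = inner v (?T *v v) / real M"
            by (simp add: scaleR_matrix_vector_assoc[symmetric])
          have e2: "lam * cL^2 / real M * (norm v)^2 = lam * (cL * norm v)^2 / real M"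
            by (simp add: power_mult_distrib)
          have "lam * (cL * norm v)^2 / real M \<le> inner v (?T *v v) / real M"
            using Tlow[of v] Mpos by (intro divide_right_mono) auto
          then show ?thesis unfolding e1 e2 .
        qed
        show "((1 / real M) *\<^sub>R ?T) *v (matrix_inv ?T *v (transpose A *v b))
              = (1 / real M) *\<^sub>R (transpose A *v b)"
        proof -
          have "?T *v (matrix_inv ?T *v (transpose A *v b)) = transpose A *v b"
            unfolding matrix_vector_mul_assoc[of ?T "matrix_inv ?T"]
              minv_right(1)[OF invT] by simp
          then show ?thesis by (metis scaleR_matrix_vector_assoc)
        qed
      qed
    qed
  qed
qed


end
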